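(* Fix $g>0$, $p_0<p_1<0$, $\ell>0$ and $[\![\rho]\!]<0$. If $\Gamma_{\mathrm{rel}}>0$ satisfies $|p_1|=\Gamma_{\mathrm{rel}}\ell$, then there exists a one-parameter family $\{(H(\cdot;\lambda),Q(\lambda)):\lambda>0\}$ of solutions to the laminar flow problem with $H_p>0$, each of which has relative circulation $\Gamma_{\mathrm{rel}}$ on the lid (i.e. $H_p(0;\lambda)^{-1}=\Gamma_{\mathrm{rel}}$). Explicitly, $$H(p;\lambda)=\begin{cases}\dfrac{p}{\Gamma_{\mathrm{rel}}}+\ell+\dfrac{p_1-p_0}{\lambda}, & p_1<p<0,\\[2mm] \dfrac{p-p_0}{\lambda}, & p_0<p<p_1,\end{cases}\qquad Q(\lambda)=\frac{2g[\![\rho]\!](p_1-p_0)}{\lambda}+\Gamma_{\mathrm{rel}}^2-\lambda^2 .$$ In particular the depth of the fluid at parameter $\lambda$ is $d(\lambda)=H(p_1;\lambda)=\dfrac{p_1-p_0}{\lambda}$ and the width of the channel is $W(\lambda)=\ell+d(\lambda)$.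
   Context: Laminar flow problem: find $Q\in\mathbb R$ and $H\in C([p_0,0])$, of class $C^2$ on $[p_0,p_1]$ and on $[p_1,0]$ (one-sided derivatives at $p_1$), such that $H_{pp}=0$ on $(p_0,p_1)\cup(p_1,0)$; $[\![H_p^{-2}]\!]+2g[\![\rho]\!]H(p_1)-Q=0$; $H(0)=\ell+d(H)$ with $d(H)=H(p_1)$; $H(p_0)=0$. Here $[\![f]\!]=f(p_1^+)-f(p_1^-)$ (air value minus water value), $[\![\rho]\!]=\rho_{\mathrm{air}}-\rho_{\mathrm{water}}$, and $g$ is the gravitational constant. *)

theory Defs
  imports "HOL-Analysis.Analysis"
begin

text \<open>Water layer: pressure interval [p0,p1]; air layer: [p1,0].\<close>

definition C2_pieces ::
  "real \<Rightarrow> real \<Rightarrow> (real \<Rightarrow> real) \<Rightarrow> (real \<Rightarrow> real) \<Rightarrow> (real \<Rightarrow> real)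
     \<Rightarrow> (real \<Rightarrow> real) \<Rightarrow> (real \<Rightarrow> real) \<Rightarrow> bool" where
  "C2_pieces p0 p1 H Hw' Hw'' Ha' Ha'' \<longleftrightarrow>
     (\<forall>p\<in>{p0..p1}. (H has_real_derivative Hw' p) (at p within {p0..p1}) \<and>
                    (Hw' has_real_derivative Hw'' p) (at p within {p0..p1})) \<and>
     continuous_on {p0..p1} Hw'' \<and>
     (\<forall>p\<in>{p1..0}. (H has_real_derivative Ha' p) (at p within {p1..0}) \<and>
                    (Ha' has_real_derivative Ha'' p) (at p within {p1..0})) \<and>
     continuous_on {p1..0} Ha''"

text \<open>The laminar flow problem; rho_jump = [[rho]] = rho_air - rho_water.
  The jump [[H_p^{-2}]] is (air value) - (water value) at p1.\<close>

definition laminar_solution ::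
  "real \<Rightarrow> real \<Rightarrow> real \<Rightarrow> real \<Rightarrow> real \<Rightarrow> (real \<Rightarrow> real) \<Rightarrow> real \<Rightarrow> bool" where
  "laminar_solution g rho_jump p0 p1 l H Q \<longleftrightarrow>
     continuous_on {p0..0} H \<and>
     (\<exists>Hw' Hw'' Ha' Ha''. C2_pieces p0 p1 H Hw' Hw'' Ha' Ha'' \<and>
        (\<forall>p\<in>{p0<..<p1}. Hw'' p = 0) \<and>
        (\<forall>p\<in>{p1<..<0}. Ha'' p = 0) \<and>
        1 / (Ha' p1)^2 - 1 / (Hw' p1)^2 + 2 * g * rho_jump * H p1 - Q = 0 \<and>
        H 0 = l + H p1 \<and>
        H p0 = 0)"

end

theory Submission
  imports Defs
begin

theorem lemma3p2:
  fixes g p0 p1 l rho_jump Gamma :: real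
  assumes "g > 0" and "p0 < p1" and "p1 < 0" and "l > 0" and "rho_jump < 0"
    and "Gamma > 0" and "\<bar>p1\<bar> = Gamma * l"
  shows "\<forall>lam > 0.
    (let H = (\<lambda>p. if p1 < p then p / Gamma + l + (p1 - p0) / lam else (p - p0) / lam);
         Q = 2 * g * rho_jump * (p1 - p0) / lam + Gamma^2 - lam^2
     in laminar_solution g rho_jump p0 p1 l H Q \<and>
        (\<exists>Hw' Hw'' Ha' Ha''. C2_pieces p0 p1 H Hw' Hw'' Ha' Ha'' \<and>
           (\<forall>p\<in>{p0..p1}. Hw' p > 0) \<and> (\<forall>p\<in>{p1..0}. Ha' p > 0) \<and>
           1 / Ha' 0 = Gamma) \<and>
        H p1 = (p1 - p0) / lam \<and>
        H 0 = l + (p1 - p0) / lam)"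
proof (intro allI impI)
  fix lam :: real assume lam: "lam > 0"
  define H where "H = (\<lambda>p. if p1 < p then p / Gamma + l + (p1 - p0) / lam else (p - p0) / lam)"
  have p1e: "p1 = - Gamma * l" using assms by auto
  have Hw: "\<forall>p\<in>{p0..p1}. H p = (p - p0) / lam" unfolding H_def by auto
  have Ha: "\<forall>p\<in>{p1..0}. H p = p / Gamma + l + (p1 - p0) / lam"
  proof
    fix p assume p: "p \<in> {p1..0}"
    show "H p = p / Gamma + l + (p1 - p0) / lam"
    proof (cases "p1 < p")
      case True then show ?thesis unfolding H_def by simp
    next
      case False then have "p = p1" using p by auto
      then show ?thesis unfolding H_def using assms p1e by (auto simp: field_simps)
    qed
  qed
  have Hmax: "H = (\<lambda>p. (p - p0) / lam + max 0 (p - p1) * (1/Gamma - 1/lam))"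
  proof
    fix p show "H p = (p - p0) / lam + max 0 (p - p1) * (1/Gamma - 1/lam)"
    proof (cases "p1 < p")
      case True then show ?thesis unfolding H_def using assms p1e lam by (auto simp: field_simps max_def)
    next
      case False then show ?thesis unfolding H_def by (auto simp: max_def)
    qed
  qed
  have cont: "continuous_on {p0..0} H" unfolding Hmax using lam by (intro continuous_intros) auto
  have dw: "(H has_real_derivative 1/lam) (at p within {p0..p1})" if "p \<in> {p0..p1}" for p
  proof -
    have "((\<lambda>p. (p - p0) / lam) has_real_derivative 1/lam) (at p within {p0..p1})"
      using lam assms by (auto intro!: derivative_eq_intros)
    then show ?thesis
      by (rule has_field_derivative_transform_within[where d=1]) (use that Hw in auto)
  qed
  have da: "(H has_real_derivative 1/Gamma) (at p within {p1..0})" if "p \<in> {p1..0}" for p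
  proof -
    have "((\<lambda>p. p / Gamma + l + (p1 - p0) / lam) has_real_derivative 1/Gamma) (at p within {p1..0})"
      using lam assms by (auto intro!: derivative_eq_intros)
    then show ?thesis
      by (rule has_field_derivative_transform_within[where d=1]) (use that Ha in auto)
  qed
  have C2: "C2_pieces p0 p1 H (\<lambda>_. 1/lam) (\<lambda>_. 0) (\<lambda>_. 1/Gamma) (\<lambda>_. 0)"
    unfolding C2_pieces_def using dw da by auto
  have Hp1: "H p1 = (p1 - p0) / lam" unfolding H_def by simp
  have H0: "H 0 = l + (p1 - p0) / lam" unfolding H_def using assms by simp
  have H0': "H p0 = 0" unfolding H_def using assms by simp
  have jump: "1 / (1/Gamma)^2 - 1 / (1/lam)^2 + 2 * g * rho_jump * H p1
      - (2 * g * rho_jump * (p1 - p0) / lam + Gamma^2 - lam^2) = 0"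
    using Hp1 by (simp add: power_divide)
  have sol: "laminar_solution g rho_jump p0 p1 l H (2 * g * rho_jump * (p1 - p0) / lam + Gamma^2 - lam^2)"
    unfolding laminar_solution_def
    apply (intro conjI cont)
    apply (rule exI[of _ "\<lambda>_. 1/lam"], rule exI[of _ "\<lambda>_. 0"],
           rule exI[of _ "\<lambda>_. 1/Gamma"], rule exI[of _ "\<lambda>_. 0"])
    using C2 jump H0 Hp1 H0' by auto
  show "let H = (\<lambda>p. if p1 < p then p / Gamma + l + (p1 - p0) / lam else (p - p0) / lam);
         Q = 2 * g * rho_jump * (p1 - p0) / lam + Gamma^2 - lam^2
     in laminar_solution g rho_jump p0 p1 l H Q \<and>
        (\<exists>Hw' Hw'' Ha' Ha''. C2_pieces p0 p1 H Hw' Hw'' Ha' Ha'' \<and>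
           (\<forall>p\<in>{p0..p1}. Hw' p > 0) \<and> (\<forall>p\<in>{p1..0}. Ha' p > 0) \<and>
           1 / Ha' 0 = Gamma) \<and>
        H p1 = (p1 - p0) / lam \<and>
        H 0 = l + (p1 - p0) / lam"
    unfolding Let_def H_def[symmetric]
  proof (intro conjI sol Hp1 H0)
    show "\<exists>Hw' Hw'' Ha' Ha''. C2_pieces p0 p1 H Hw' Hw'' Ha' Ha'' \<and>
           (\<forall>p\<in>{p0..p1}. Hw' p > 0) \<and> (\<forall>p\<in>{p1..0}. Ha' p > 0) \<and>
           1 / Ha' 0 = Gamma"
      using C2 lam assms by (intro exI[of _ "\<lambda>_. 1/lam"] exI[of _ "\<lambda>_. 0"] exI[of _ "\<lambda>_. 1/Gamma"]) auto
  qed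
qed

end
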